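(* Let $L\subseteq Q$ be a dense extension of Lie algebras such that $Q$ is a multiplicatively semiprime algebra of quotients of $L$. Then for every essential ideal $I$ of $L$, $\mathrm{l.ann}_{A(Q)}(\widetilde I)=0$.
   Context: Lie algebras over a commutative unital ring $\Phi$. $\mathrm{ad}_x(y)=[x,y]$; $A(Q)$ is the associative subalgebra of $\mathrm{End}_\Phi(Q)$ generated by all $\mathrm{ad}_x$, $x\in Q$, and $M(Q)$ is the one generated by the identity and all $\mathrm{ad}_x$. $A_Q(L)$ is the subalgebra of $A(Q)$ generated by $\{\mathrm{ad}_x:x\in L\}$, and for an ideal $I$ of $L$, $\widetilde I$ is the two-sided ideal of $A_Q(L)$ generated by $\{\mathrm{ad}_x:x\in I\}$. $\mathrm{l.ann}_B(X)=\{b\in B:bX=0\}$. An extension $L\subseteq Q$ is dense if the only $\mu\in M(Q)$ with $\mu(L)=0$ is $\mu=0$. A Lie algebra is semiprime if $[I,I]\neq0$ for every nonzero ideal $I$; $Q$ is multiplicatively semiprime if $Q$ and $M(Q)$ are semiprime. An ideal is essential if it meets every nonzero ideal nontrivially. $Q$ is an algebra of quotients of $L$ if for every nonzero $q\in Q$ there is an ideal $J$ of $L$ with $\mathrm{Ann}_L(J)=\{a\in L:[a,J]=0\}=0$ and $0\ne[J,q]\subseteq L$. *)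

theory Defs
  imports Main "HOL.Modules"
begin

text \<open>Lie algebra Q over a commutative unital ring \<Phi> (= type 'r): the carrier is the whole
  type 'q, a \<Phi>-module via scale, with bracket br.\<close>

definition lie_algebra :: "('r::comm_ring_1 \<Rightarrow> 'q::ab_group_add \<Rightarrow> 'q) \<Rightarrow> ('q \<Rightarrow> 'q \<Rightarrow> 'q) \<Rightarrow> bool" where
  "lie_algebra scale br \<longleftrightarrow> module scale \<and>
     (\<forall>x y z. br (x + y) z = br x z + br y z) \<and>
     (\<forall>x y z. br x (y + z) = br x y + br x z) \<and>
     (\<forall>c x y. br (scale c x) y = scale c (br x y)) \<and>
     (\<forall>c x y. br x (scale c y) = scale c (br x y)) \<and>
     (\<forall>x. br x x = 0) \<and>
     (\<forall>x y z. br x (br y z) + br y (br z x) + br z (br x y) = 0)"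

definition ad :: "('q \<Rightarrow> 'q \<Rightarrow> 'q) \<Rightarrow> 'q \<Rightarrow> 'q \<Rightarrow> 'q" where
  "ad br x = (\<lambda>y. br x y)"

inductive_set alg_gen :: "('r \<Rightarrow> 'q \<Rightarrow> 'q) \<Rightarrow> ('q \<Rightarrow> 'q) set \<Rightarrow> ('q::ab_group_add \<Rightarrow> 'q) set"
  for scale :: "'r \<Rightarrow> 'q \<Rightarrow> 'q" and S :: "('q \<Rightarrow> 'q) set" where
  gen: "f \<in> S \<Longrightarrow> f \<in> alg_gen scale S"
| zero: "(\<lambda>_. 0) \<in> alg_gen scale S"
| add: "f \<in> alg_gen scale S \<Longrightarrow> g \<in> alg_gen scale S \<Longrightarrow> (\<lambda>x. f x + g x) \<in> alg_gen scale S"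
| smul: "f \<in> alg_gen scale S \<Longrightarrow> (\<lambda>x. scale c (f x)) \<in> alg_gen scale S"
| mult: "f \<in> alg_gen scale S \<Longrightarrow> g \<in> alg_gen scale S \<Longrightarrow> f \<circ> g \<in> alg_gen scale S"

inductive_set ideal_gen :: "('r \<Rightarrow> 'q \<Rightarrow> 'q) \<Rightarrow> ('q \<Rightarrow> 'q) set \<Rightarrow> ('q \<Rightarrow> 'q) set \<Rightarrow> ('q::ab_group_add \<Rightarrow> 'q) set"
  for scale :: "'r \<Rightarrow> 'q \<Rightarrow> 'q" and B :: "('q \<Rightarrow> 'q) set" and X :: "('q \<Rightarrow> 'q) set" where
  gen: "f \<in> X \<Longrightarrow> f \<in> ideal_gen scale B X"
| zero: "(\<lambda>_. 0) \<in> ideal_gen scale B X"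
| add: "f \<in> ideal_gen scale B X \<Longrightarrow> g \<in> ideal_gen scale B X \<Longrightarrow> (\<lambda>x. f x + g x) \<in> ideal_gen scale B X"
| smul: "f \<in> ideal_gen scale B X \<Longrightarrow> (\<lambda>x. scale c (f x)) \<in> ideal_gen scale B X"
| lmult: "b \<in> B \<Longrightarrow> f \<in> ideal_gen scale B X \<Longrightarrow> b \<circ> f \<in> ideal_gen scale B X"
| rmult: "b \<in> B \<Longrightarrow> f \<in> ideal_gen scale B X \<Longrightarrow> f \<circ> b \<in> ideal_gen scale B X"

definition AQ :: "('r \<Rightarrow> 'q \<Rightarrow> 'q) \<Rightarrow> ('q \<Rightarrow> 'q \<Rightarrow> 'q) \<Rightarrow> ('q::ab_group_add \<Rightarrow> 'q) set" where
  "AQ scale br = alg_gen scale {ad br x | x. True}"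

definition MQ :: "('r \<Rightarrow> 'q \<Rightarrow> 'q) \<Rightarrow> ('q \<Rightarrow> 'q \<Rightarrow> 'q) \<Rightarrow> ('q::ab_group_add \<Rightarrow> 'q) set" where
  "MQ scale br = alg_gen scale (insert id {ad br x | x. True})"

definition AQL :: "('r \<Rightarrow> 'q \<Rightarrow> 'q) \<Rightarrow> ('q \<Rightarrow> 'q \<Rightarrow> 'q) \<Rightarrow> 'q set \<Rightarrow> ('q::ab_group_add \<Rightarrow> 'q) set" where
  "AQL scale br L = alg_gen scale {ad br x | x. x \<in> L}"

definition tilde :: "('r \<Rightarrow> 'q \<Rightarrow> 'q) \<Rightarrow> ('q \<Rightarrow> 'q \<Rightarrow> 'q) \<Rightarrow> 'q set \<Rightarrow> 'q set \<Rightarrow> ('q::ab_group_add \<Rightarrow> 'q) set" where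
  "tilde scale br L I = ideal_gen scale (AQL scale br L) {ad br x | x. x \<in> I}"

definition l_ann :: "('q \<Rightarrow> 'q) set \<Rightarrow> ('q \<Rightarrow> 'q) set \<Rightarrow> ('q::zero \<Rightarrow> 'q) set" where
  "l_ann B X = {b \<in> B. \<forall>f \<in> X. b \<circ> f = (\<lambda>_. 0)}"

definition lie_subalgebra :: "('r::comm_ring_1 \<Rightarrow> 'q::ab_group_add \<Rightarrow> 'q) \<Rightarrow> ('q \<Rightarrow> 'q \<Rightarrow> 'q) \<Rightarrow> 'q set \<Rightarrow> bool" where
  "lie_subalgebra scale br L \<longleftrightarrow> module.subspace scale L \<and> (\<forall>x\<in>L. \<forall>y\<in>L. br x y \<in> L)"

definition lie_ideal :: "('r::comm_ring_1 \<Rightarrow> 'q::ab_group_add \<Rightarrow> 'q) \<Rightarrow> ('q \<Rightarrow> 'q \<Rightarrow> 'q) \<Rightarrow> 'q set \<Rightarrow> 'q set \<Rightarrow> bool" where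
  "lie_ideal scale br L I \<longleftrightarrow> module.subspace scale I \<and> I \<subseteq> L \<and> (\<forall>x\<in>L. \<forall>y\<in>I. br x y \<in> I)"

definition essential_ideal :: "('r::comm_ring_1 \<Rightarrow> 'q::ab_group_add \<Rightarrow> 'q) \<Rightarrow> ('q \<Rightarrow> 'q \<Rightarrow> 'q) \<Rightarrow> 'q set \<Rightarrow> 'q set \<Rightarrow> bool" where
  "essential_ideal scale br L I \<longleftrightarrow> lie_ideal scale br L I \<and>
     (\<forall>K. lie_ideal scale br L K \<and> K \<noteq> {0} \<longrightarrow> I \<inter> K \<noteq> {0})"

definition lie_semiprime :: "('r::comm_ring_1 \<Rightarrow> 'q::ab_group_add \<Rightarrow> 'q) \<Rightarrow> ('q \<Rightarrow> 'q \<Rightarrow> 'q) \<Rightarrow> bool" where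
  "lie_semiprime scale br \<longleftrightarrow>
     (\<forall>I. lie_ideal scale br UNIV I \<and> I \<noteq> {0} \<longrightarrow> (\<exists>a\<in>I. \<exists>b\<in>I. br a b \<noteq> 0))"

definition alg_ideal :: "('r \<Rightarrow> 'q::ab_group_add \<Rightarrow> 'q) \<Rightarrow> ('q \<Rightarrow> 'q) set \<Rightarrow> ('q \<Rightarrow> 'q) set \<Rightarrow> bool" where
  "alg_ideal scale B J \<longleftrightarrow> J \<subseteq> B \<and> (\<lambda>_. 0) \<in> J \<and>
     (\<forall>f\<in>J. \<forall>g\<in>J. (\<lambda>x. f x + g x) \<in> J) \<and> (\<forall>c. \<forall>f\<in>J. (\<lambda>x. scale c (f x)) \<in> J) \<and>
     (\<forall>b\<in>B. \<forall>f\<in>J. b \<circ> f \<in> J \<and> f \<circ> b \<in> J)"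

definition alg_semiprime :: "('r \<Rightarrow> 'q::ab_group_add \<Rightarrow> 'q) \<Rightarrow> ('q \<Rightarrow> 'q) set \<Rightarrow> bool" where
  "alg_semiprime scale B \<longleftrightarrow>
     (\<forall>J. alg_ideal scale B J \<and> J \<noteq> {\<lambda>_. 0} \<longrightarrow> (\<exists>f\<in>J. \<exists>g\<in>J. f \<circ> g \<noteq> (\<lambda>_. 0)))"

definition mult_semiprime :: "('r::comm_ring_1 \<Rightarrow> 'q::ab_group_add \<Rightarrow> 'q) \<Rightarrow> ('q \<Rightarrow> 'q \<Rightarrow> 'q) \<Rightarrow> bool" where
  "mult_semiprime scale br \<longleftrightarrow> lie_semiprime scale br \<and> alg_semiprime scale (MQ scale br)"

definition dense_ext :: "('r::comm_ring_1 \<Rightarrow> 'q::ab_group_add \<Rightarrow> 'q) \<Rightarrow> ('q \<Rightarrow> 'q \<Rightarrow> 'q) \<Rightarrow> 'q set \<Rightarrow> bool" where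
  "dense_ext scale br L \<longleftrightarrow> (\<forall>\<mu>\<in>MQ scale br. (\<forall>x\<in>L. \<mu> x = 0) \<longrightarrow> \<mu> = (\<lambda>_. 0))"

definition lie_ann :: "('q \<Rightarrow> 'q \<Rightarrow> 'q) \<Rightarrow> 'q set \<Rightarrow> 'q set \<Rightarrow> ('q::zero) set" where
  "lie_ann br L J = {a \<in> L. \<forall>j\<in>J. br a j = 0}"

definition algebra_of_quotients :: "('r::comm_ring_1 \<Rightarrow> 'q::ab_group_add \<Rightarrow> 'q) \<Rightarrow> ('q \<Rightarrow> 'q \<Rightarrow> 'q) \<Rightarrow> 'q set \<Rightarrow> bool" where
  "algebra_of_quotients scale br L \<longleftrightarrow>
     (\<forall>q. q \<noteq> 0 \<longrightarrow> (\<exists>J. lie_ideal scale br L J \<and> lie_ann br L J = {0} \<and>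
        {br a q | a. a \<in> J} \<noteq> {0} \<and> {br a q | a. a \<in> J} \<subseteq> L))"

end

theory Submission
  imports Defs
begin

definition lin :: "('r \<Rightarrow> 'q::ab_group_add \<Rightarrow> 'q) \<Rightarrow> ('q \<Rightarrow> 'q) \<Rightarrow> bool" where
  "lin scale f \<longleftrightarrow> (\<forall>x y. f (x + y) = f x + f y) \<and> (\<forall>c x. f (scale c x) = scale c (f x))"

lemma lin_zero: "lin scale f \<Longrightarrow> f 0 = 0"
  unfolding lin_def by (metis add_cancel_right_right add_0)

lemma lin_add: "lin scale f \<Longrightarrow> f (x + y) = f x + f y"
  unfolding lin_def by blast

lemma lin_scale: "lin scale f \<Longrightarrow> f (scale c x) = scale c (f x)"
  unfolding lin_def by blast

lemma lin_neg: "lin scale f \<Longrightarrow> f (- x) = - f x"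
proof -
  assume l: "lin scale f"
  have "f (- x) + f x = 0" using lin_add[OF l, of "-x" x] lin_zero[OF l] by simp
  then show ?thesis by (simp add: eq_neg_iff_add_eq_0)
qed

lemma lin_alg_gen:
  assumes m: "module scale" and S: "\<forall>g\<in>S. lin scale g" and f: "f \<in> alg_gen scale S"
  shows "lin scale f"
  using f
proof (induction rule: alg_gen.induct)
  case (gen f) then show ?case using S by blast
next
  case zero then show ?case unfolding lin_def using module.scale_zero_right[OF m] by simp
next
  case (add f g) then show ?case unfolding lin_def by (simp add: algebra_simps module.scale_right_distrib[OF m])
next
  case (smul f c) then show ?case unfolding lin_def
    by (simp add: module.scale_right_distrib[OF m] module.scale_left_commute[OF m])
next
  case (mult f g) then show ?case unfolding lin_def by simp
qed

lemma alg_gen_mono: assumes "S \<subseteq> T" "f \<in> alg_gen scale S" shows "f \<in> alg_gen scale T"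
  using assms(2)
proof (induction rule: alg_gen.induct)
  case (gen f) then show ?case using assms(1) by (blast intro: alg_gen.gen)
qed (blast intro: alg_gen.intros)+

context
  fixes scale :: "'r::comm_ring_1 \<Rightarrow> 'q::ab_group_add \<Rightarrow> 'q"
    and br :: "'q \<Rightarrow> 'q \<Rightarrow> 'q"
  assumes la: "lie_algebra scale br"
begin

lemma mod: "module scale" using la unfolding lie_algebra_def by blast
lemma br_addl: "br (x + y) z = br x z + br y z" using la unfolding lie_algebra_def by blast
lemma br_addr: "br x (y + z) = br x y + br x z" using la unfolding lie_algebra_def by blast
lemma br_scl: "br (scale c x) y = scale c (br x y)" using la unfolding lie_algebra_def by blast
lemma br_scr: "br x (scale c y) = scale c (br x y)" using la unfolding lie_algebra_def by blast
lemma br_alt: "br x x = 0" using la unfolding lie_algebra_def by blast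
lemma jac: "br x (br y z) + br y (br z x) + br z (br x y) = 0" using la unfolding lie_algebra_def by blast

lemma br_0r: "br x 0 = 0" using br_addr[of x 0 0] by simp
lemma br_0l: "br 0 x = 0" using br_addl[of 0 0 x] by simp

lemma br_anti: "br x y = - br y x"
proof -
  have "br (x+y) (x+y) = 0" by (rule br_alt)
  also have "br (x+y) (x+y) = br x x + br x y + (br y x + br y y)" by (simp add: br_addl br_addr add.assoc)
  finally have "br x y + br y x = 0" by (simp add: br_alt)
  then show ?thesis by (simp add: eq_neg_iff_add_eq_0)
qed

lemma lin_ad: "lin scale (ad br x)"
  unfolding lin_def ad_def by (simp add: br_addr br_scr)

lemma lin_MQ: "f \<in> MQ scale br \<Longrightarrow> lin scale f"
  unfolding MQ_def
  by (rule lin_alg_gen[OF mod]) (auto simp: lin_def ad_def br_addr br_scr)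

lemma ad_MQ: "ad br x \<in> MQ scale br"
  unfolding MQ_def by (rule alg_gen.gen) auto

lemma id_MQ: "id \<in> MQ scale br"
  unfolding MQ_def by (rule alg_gen.gen) auto

lemma comp_MQ: "f \<in> MQ scale br \<Longrightarrow> g \<in> MQ scale br \<Longrightarrow> f \<circ> g \<in> MQ scale br"
  unfolding MQ_def by (rule alg_gen.mult)

lemma AQ_MQ: "f \<in> AQ scale br \<Longrightarrow> f \<in> MQ scale br"
  unfolding AQ_def MQ_def by (erule alg_gen_mono[rotated]) auto

lemma right_stable:
  assumes dense: "dense_ext scale br L"
    and A: "A \<subseteq> L" "\<forall>a\<in>A. \<forall>l\<in>L. br a l \<in> A"
    and b: "\<beta> \<in> MQ scale br"
  shows "\<forall>\<nu>\<in>MQ scale br. (\<forall>a\<in>A. \<nu> \<circ> ad br a = (\<lambda>_. 0)) \<longrightarrow> (\<forall>a\<in>A. \<nu> \<circ> \<beta> \<circ> ad br a = (\<lambda>_. 0))"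
  using b unfolding MQ_def
proof (induction rule: alg_gen.induct)
  case (gen f)
  show ?case
  proof (intro ballI impI)
    fix \<nu> a assume \<nu>: "\<nu> \<in> alg_gen scale (insert id {ad br x |x. True})"
      and h: "\<forall>a\<in>A. \<nu> \<circ> ad br a = (\<lambda>_. 0)" and a: "a \<in> A"
    show "\<nu> \<circ> f \<circ> ad br a = (\<lambda>_. 0)"
    proof (cases "f = id")
      case True then show ?thesis using h a by simp
    next
      case False
      then obtain q where q: "f = ad br q" using gen by auto
      have nM: "\<nu> \<in> MQ scale br" using \<nu> unfolding MQ_def .
      have mem: "\<nu> \<circ> f \<circ> ad br a \<in> MQ scale br"
        using nM q by (simp add: comp_MQ ad_MQ)
      have "\<forall>x\<in>L. (\<nu> \<circ> f \<circ> ad br a) x = 0"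
      proof
        fix x assume x: "x \<in> L"
        have ax: "br a x \<in> A" using A a x by blast
        have "(\<nu> \<circ> f \<circ> ad br a) x = \<nu> (br q (br a x))" using q by (simp add: ad_def)
        also have "\<dots> = \<nu> (- br (br a x) q)" by (simp add: br_anti[of q])
        also have "\<dots> = - \<nu> (br (br a x) q)" using lin_neg[OF lin_MQ[OF nM]] by simp
        also have "\<nu> (br (br a x) q) = (\<nu> \<circ> ad br (br a x)) q" by (simp add: ad_def)
        also have "\<dots> = 0" using h ax by simp
        finally show "(\<nu> \<circ> f \<circ> ad br a) x = 0" by simp
      qed
      then show ?thesis using dense mem unfolding dense_ext_def by blast
    qed
  qed
next
  case zero
  show ?case
  proof (intro ballI impI)
    fix \<nu> a assume \<nu>: "\<nu> \<in> alg_gen scale (insert id {ad br x |x. True})"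
    then have "\<nu> 0 = 0" using lin_zero lin_MQ unfolding MQ_def by blast
    then show "\<nu> \<circ> (\<lambda>_. 0) \<circ> ad br a = (\<lambda>_. 0)" by (simp add: comp_def)
  qed
next
  case (add f g)
  show ?case
  proof (intro ballI impI)
    fix \<nu> a assume \<nu>: "\<nu> \<in> alg_gen scale (insert id {ad br x |x. True})"
      and h: "\<forall>a\<in>A. \<nu> \<circ> ad br a = (\<lambda>_. 0)" and a: "a \<in> A"
    have l: "lin scale \<nu>" using \<nu> lin_MQ unfolding MQ_def by blast
    have f0: "\<And>y. \<nu> (f (br a y)) = 0" proof -
      have "\<nu> \<circ> f \<circ> ad br a = (\<lambda>_. 0)" using add.IH(1) \<nu> h a by blast
      from fun_cong[OF this] show "\<And>y. \<nu> (f (br a y)) = 0" by (simp add: ad_def)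
    qed
    have g0: "\<And>y. \<nu> (g (br a y)) = 0" proof -
      have "\<nu> \<circ> g \<circ> ad br a = (\<lambda>_. 0)" using add.IH(2) \<nu> h a by blast
      from fun_cong[OF this] show "\<And>y. \<nu> (g (br a y)) = 0" by (simp add: ad_def)
    qed
    show "\<nu> \<circ> (\<lambda>x. f x + g x) \<circ> ad br a = (\<lambda>_. 0)"
      by (rule ext) (simp add: ad_def lin_add[OF l] f0 g0)
  qed
next
  case (smul f c)
  show ?case
  proof (intro ballI impI)
    fix \<nu> a assume \<nu>: "\<nu> \<in> alg_gen scale (insert id {ad br x |x. True})"
      and h: "\<forall>a\<in>A. \<nu> \<circ> ad br a = (\<lambda>_. 0)" and a: "a \<in> A"
    have l: "lin scale \<nu>" using \<nu> lin_MQ unfolding MQ_def by blast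
    have f0: "\<And>y. \<nu> (f (br a y)) = 0" proof -
      have "\<nu> \<circ> f \<circ> ad br a = (\<lambda>_. 0)" using smul.IH \<nu> h a by blast
      from fun_cong[OF this] show "\<And>y. \<nu> (f (br a y)) = 0" by (simp add: ad_def)
    qed
    show "\<nu> \<circ> (\<lambda>x. scale c (f x)) \<circ> ad br a = (\<lambda>_. 0)"
      by (rule ext) (simp add: ad_def lin_scale[OF l] f0 module.scale_zero_right[OF mod])
  qed
next
  case (mult f g)
  show ?case
  proof (intro ballI impI)
    fix \<nu> a assume \<nu>: "\<nu> \<in> alg_gen scale (insert id {ad br x |x. True})"
      and h: "\<forall>a\<in>A. \<nu> \<circ> ad br a = (\<lambda>_. 0)" and a: "a \<in> A"
    have h1: "\<forall>a\<in>A. \<nu> \<circ> f \<circ> ad br a = (\<lambda>_. 0)" using mult.IH(1) \<nu> h by blast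
    have m1: "\<nu> \<circ> f \<in> alg_gen scale (insert id {ad br x |x. True})"
      using \<nu> mult.hyps(1) by (rule alg_gen.mult)
    have "\<forall>a\<in>A. \<nu> \<circ> f \<circ> g \<circ> ad br a = (\<lambda>_. 0)" using mult.IH(2) m1 h1 by blast
    then show "\<nu> \<circ> (f \<circ> g) \<circ> ad br a = (\<lambda>_. 0)" using a by (simp add: comp_assoc)
  qed
qed

lemma semiprime_zero:
  assumes sp: "alg_semiprime scale (MQ scale br)" and g: "g \<in> MQ scale br"
    and gg: "\<forall>\<beta>\<in>MQ scale br. g \<circ> \<beta> \<circ> g = (\<lambda>_. 0)"
  shows "g = (\<lambda>_. 0)"
proof -
  let ?M = "MQ scale br"
  let ?J = "ideal_gen scale ?M {g}"
  have JM: "h \<in> ?M" if "h \<in> ?J" for h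
    using that
  proof (induction rule: ideal_gen.induct)
    case (gen f) then show ?case using g by simp
  next
    case zero then show ?case unfolding MQ_def by (rule alg_gen.zero)
  next
    case (add f h) then show ?case unfolding MQ_def by (blast intro: alg_gen.add)
  next
    case (smul f c) then show ?case unfolding MQ_def by (blast intro: alg_gen.smul)
  next
    case (lmult b f) then show ?case by (blast intro: comp_MQ)
  next
    case (rmult b f) then show ?case by (blast intro: comp_MQ)
  qed
  have lg: "lin scale g" using g by (rule lin_MQ)
  have A: "\<forall>\<beta>\<in>?M. g \<circ> \<beta> \<circ> h = (\<lambda>_. 0)" if "h \<in> ?J" for h
    using that
  proof (induction rule: ideal_gen.induct)
    case (gen f) then have "f = g" by simp
    then show ?case using gg by blast
  next
    case zero
    show ?case
    proof
      fix \<beta> assume "\<beta> \<in> ?M"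
      then have "lin scale \<beta>" by (rule lin_MQ)
      then show "g \<circ> \<beta> \<circ> (\<lambda>_. 0) = (\<lambda>_. 0)" using lg by (simp add: comp_def lin_zero)
    qed
  next
    case (add f h)
    show ?case
    proof
      fix \<beta> assume b: "\<beta> \<in> ?M"
      then have lb: "lin scale \<beta>" by (rule lin_MQ)
      have f0: "g (\<beta> (f y)) = 0" for y using fun_cong[OF add.IH(1)[rule_format, OF b]] by simp
      have h0: "g (\<beta> (h y)) = 0" for y using fun_cong[OF add.IH(2)[rule_format, OF b]] by simp
      show "g \<circ> \<beta> \<circ> (\<lambda>x. f x + h x) = (\<lambda>_. 0)"
        by (rule ext) (simp add: lin_add[OF lb] lin_add[OF lg] f0 h0)
    qed
  next
    case (smul f c)
    show ?case
    proof
      fix \<beta> assume b: "\<beta> \<in> ?M"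
      then have lb: "lin scale \<beta>" by (rule lin_MQ)
      have f0: "g (\<beta> (f y)) = 0" for y using fun_cong[OF smul.IH[rule_format, OF b]] by simp
      show "g \<circ> \<beta> \<circ> (\<lambda>x. scale c (f x)) = (\<lambda>_. 0)"
        by (rule ext) (simp add: lin_scale[OF lb] lin_scale[OF lg] f0 module.scale_zero_right[OF mod])
    qed
  next
    case (lmult b f)
    show ?case
    proof
      fix \<beta> assume bb: "\<beta> \<in> ?M"
      have "\<beta> \<circ> b \<in> ?M" using bb lmult.hyps(1) by (rule comp_MQ)
      then have "g \<circ> (\<beta> \<circ> b) \<circ> f = (\<lambda>_. 0)" using lmult.IH by blast
      then show "g \<circ> \<beta> \<circ> (b \<circ> f) = (\<lambda>_. 0)" by (simp add: comp_assoc)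
    qed
  next
    case (rmult b f)
    show ?case
    proof
      fix \<beta> assume bb: "\<beta> \<in> ?M"
      have "g \<circ> \<beta> \<circ> f = (\<lambda>_. 0)" using bb rmult.IH by blast
      then have "\<forall>x. g (\<beta> (f x)) = 0" by (simp add: fun_eq_iff)
      then show "g \<circ> \<beta> \<circ> (f \<circ> b) = (\<lambda>_. 0)" by (simp add: fun_eq_iff)
    qed
  qed
  have B: "\<forall>\<beta>\<in>?M. \<forall>h2\<in>?J. h1 \<circ> \<beta> \<circ> h2 = (\<lambda>_. 0)" if "h1 \<in> ?J" for h1
    using that
  proof (induction rule: ideal_gen.induct)
    case (gen f) then have "f = g" by simp
    then show ?case using A by blast
  next
    case zero then show ?case by (simp add: comp_def)
  next
    case (add f h)
    show ?case
    proof (intro ballI)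
      fix \<beta> h2 assume b: "\<beta> \<in> ?M" and h2: "h2 \<in> ?J"
      have f0: "f (\<beta> (h2 y)) = 0" for y using fun_cong[OF add.IH(1)[rule_format, OF b h2]] by simp
      have h0: "h (\<beta> (h2 y)) = 0" for y using fun_cong[OF add.IH(2)[rule_format, OF b h2]] by simp
      show "(\<lambda>x. f x + h x) \<circ> \<beta> \<circ> h2 = (\<lambda>_. 0)" by (rule ext) (simp add: f0 h0)
    qed
  next
    case (smul f c)
    show ?case
    proof (intro ballI)
      fix \<beta> h2 assume b: "\<beta> \<in> ?M" and h2: "h2 \<in> ?J"
      have f0: "f (\<beta> (h2 y)) = 0" for y using fun_cong[OF smul.IH[rule_format, OF b h2]] by simp
      show "(\<lambda>x. scale c (f x)) \<circ> \<beta> \<circ> h2 = (\<lambda>_. 0)"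
        by (rule ext) (simp add: f0 module.scale_zero_right[OF mod])
    qed
  next
    case (lmult b f)
    show ?case
    proof (intro ballI)
      fix \<beta> h2 assume bb: "\<beta> \<in> ?M" and h2: "h2 \<in> ?J"
      have lb: "lin scale b" using lmult.hyps(1) by (rule lin_MQ)
      have f0: "f (\<beta> (h2 y)) = 0" for y using fun_cong[OF lmult.IH[rule_format, OF bb h2]] by simp
      show "b \<circ> f \<circ> \<beta> \<circ> h2 = (\<lambda>_. 0)" by (rule ext) (simp add: f0 lin_zero[OF lb])
    qed
  next
    case (rmult b f)
    show ?case
    proof (intro ballI)
      fix \<beta> h2 assume bb: "\<beta> \<in> ?M" and h2: "h2 \<in> ?J"
      have "b \<circ> \<beta> \<in> ?M" using rmult.hyps(1) bb by (rule comp_MQ)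
      then have "f \<circ> (b \<circ> \<beta>) \<circ> h2 = (\<lambda>_. 0)" using rmult.IH h2 by blast
      then show "f \<circ> b \<circ> \<beta> \<circ> h2 = (\<lambda>_. 0)" by (simp add: comp_assoc)
    qed
  qed
  have Jid: "alg_ideal scale ?M ?J"
    unfolding alg_ideal_def
    by (auto intro: JM ideal_gen.intros)
  have "\<not> (\<exists>f\<in>?J. \<exists>h\<in>?J. f \<circ> h \<noteq> (\<lambda>_. 0))"
  proof
    assume "\<exists>f\<in>?J. \<exists>h\<in>?J. f \<circ> h \<noteq> (\<lambda>_. 0)"
    then obtain f h where f: "f \<in> ?J" and h: "h \<in> ?J" and ne: "f \<circ> h \<noteq> (\<lambda>_. 0)" by blast
    have "f \<circ> id \<circ> h = (\<lambda>_. 0)" using B[OF f] id_MQ h by blast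
    then show False using ne by simp
  qed
  then have "?J = {\<lambda>_. 0}" using sp Jid unfolding alg_semiprime_def by blast
  moreover have "g \<in> ?J" by (rule ideal_gen.gen) simp
  ultimately show ?thesis by simp
qed

lemma ideal_right:
  assumes "lie_ideal scale br L I" "x \<in> I" "l \<in> L"
  shows "br x l \<in> I"
proof -
  have "br l x \<in> I" using assms unfolding lie_ideal_def by blast
  then have "- br l x \<in> I" using assms(1) module.subspace_neg[OF mod] unfolding lie_ideal_def by blast
  then show ?thesis by (simp add: br_anti[of x l])
qed

lemma ann_zero:
  assumes sub: "lie_subalgebra scale br L" and dense: "dense_ext scale br L"
    and ms: "mult_semiprime scale br" and qt: "algebra_of_quotients scale br L"
    and ess: "essential_ideal scale br L I" and w: "\<forall>x\<in>I. br x w = 0"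
  shows "w = 0"
proof (rule ccontr)
  assume wne: "w \<noteq> 0"
  have Iid: "lie_ideal scale br L I" using ess unfolding essential_ideal_def by blast
  have IL: "I \<subseteq> L" using Iid unfolding lie_ideal_def by blast
  obtain J where J: "lie_ideal scale br L J" "{br a w | a. a \<in> J} \<noteq> {0}" "{br a w | a. a \<in> J} \<subseteq> L"
    using qt wne unfolding algebra_of_quotients_def by blast
  have J0: "0 \<in> J" using J(1) module.subspace_0[OF mod] unfolding lie_ideal_def by blast
  have JL: "J \<subseteq> L" using J(1) unfolding lie_ideal_def by blast
  have z0: "0 \<in> {br a w | a. a \<in> J}"
  proof -
    have "br 0 w = 0" by (rule br_0l)
    then show ?thesis using J0 by force
  qed
  have "\<exists>a\<in>J. br a w \<noteq> 0"
  proof (rule ccontr)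
    assume "\<not> (\<exists>a\<in>J. br a w \<noteq> 0)"
    then have "{br a w | a. a \<in> J} \<subseteq> {0}" by auto
    then have "{br a w | a. a \<in> J} = {0}" using z0 by blast
    then show False using J(2) by (rule notE[rotated])
  qed
  then obtain j where j: "j \<in> J" "br j w \<noteq> 0" by blast
  define s where "s = br j w"
  have sL: "s \<in> L" using J(3) j(1) unfolding s_def by blast
  have sI: "br x s = 0" if x: "x \<in> I" for x
  proof -
    have "br x (br j w) + br j (br w x) + br w (br x j) = 0" by (rule jac)
    moreover have "br w x = 0" using w x br_anti[of w x] by simp
    moreover have "br x j \<in> I" using ideal_right[OF Iid x] j(1) JL by blast
    then have "br w (br x j) = 0" using w br_anti[of w "br x j"] by simp
    ultimately show ?thesis unfolding s_def by (simp add: br_0r)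
  qed
  define K where "K = {a \<in> L. \<forall>x\<in>I. br a x = 0}"
  have subL: "module.subspace scale L" "\<forall>x\<in>L. \<forall>y\<in>L. br x y \<in> L"
    using sub unfolding lie_subalgebra_def by blast+
  have Kid: "lie_ideal scale br L K"
    unfolding lie_ideal_def
  proof (intro conjI)
    show "module.subspace scale K"
      unfolding module.subspace_def[OF mod] K_def
      using subL(1) unfolding module.subspace_def[OF mod]
      by (auto simp: br_0l br_addl br_scl module.scale_zero_right[OF mod])
    show "K \<subseteq> L" unfolding K_def by blast
    show "\<forall>x\<in>L. \<forall>y\<in>K. br x y \<in> K"
    proof (intro ballI)
      fix l a assume l: "l \<in> L" and a: "a \<in> K"
      have "br l a \<in> L" using subL(2) l a unfolding K_def by blast
      moreover have "br (br l a) x = 0" if x: "x \<in> I" for x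
      proof -
        have "br l (br a x) + br a (br x l) + br x (br l a) = 0" by (rule jac)
        moreover have "br a x = 0" using a x unfolding K_def by blast
        moreover have "br a (br x l) = 0" using a ideal_right[OF Iid x l] unfolding K_def by blast
        ultimately have "br x (br l a) = 0" by (simp add: br_0r)
        then show ?thesis using br_anti[of "br l a" x] by simp
      qed
      ultimately show "br l a \<in> K" unfolding K_def by blast
    qed
  qed
  have sK: "s \<in> K"
  proof -
    have "br s x = 0" if "x \<in> I" for x using sI[OF that] br_anti[of s x] by simp
    then show ?thesis unfolding K_def using sL by blast
  qed
  have "K \<noteq> {0}" using sK j(2) unfolding s_def by auto
  then have "I \<inter> K \<noteq> {0}" using ess Kid unfolding essential_ideal_def by blast
  moreover have "0 \<in> I \<inter> K" using Iid Kid module.subspace_0[OF mod] unfolding lie_ideal_def by blast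
  ultimately obtain k where k: "k \<in> I" "k \<in> K" "k \<noteq> 0" by blast
  define A where "A = I \<inter> K"
  have AL: "A \<subseteq> L" unfolding A_def using IL by blast
  have Acl: "\<forall>a\<in>A. \<forall>l\<in>L. br a l \<in> A"
    unfolding A_def using ideal_right[OF Iid] ideal_right[OF Kid] by blast
  have kA: "k \<in> A" unfolding A_def using k by blast
  have adk: "\<forall>a\<in>A. ad br k \<circ> ad br a = (\<lambda>_. 0)"
  proof
    fix a assume a: "a \<in> A"
    have mem: "ad br k \<circ> ad br a \<in> MQ scale br" by (simp add: comp_MQ ad_MQ)
    have "\<forall>l\<in>L. (ad br k \<circ> ad br a) l = 0"
    proof
      fix l assume l: "l \<in> L"
      have "br a l \<in> A" using Acl a l by blast
      then have "br a l \<in> I" unfolding A_def by blast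
      then show "(ad br k \<circ> ad br a) l = 0" using k(2) unfolding K_def ad_def by simp
    qed
    then show "ad br k \<circ> ad br a = (\<lambda>_. 0)" using dense mem unfolding dense_ext_def by blast
  qed
  have "\<forall>\<beta>\<in>MQ scale br. ad br k \<circ> \<beta> \<circ> ad br k = (\<lambda>_. 0)"
  proof
    fix \<beta> assume b: "\<beta> \<in> MQ scale br"
    show "ad br k \<circ> \<beta> \<circ> ad br k = (\<lambda>_. 0)"
      using right_stable[OF dense AL Acl b] ad_MQ adk kA by blast
  qed
  then have adk0: "ad br k = (\<lambda>_. 0)"
    using semiprime_zero ms ad_MQ unfolding mult_semiprime_def by blast
  define Z where "Z = {z. \<forall>y. br z y = 0}"
  have Zid: "lie_ideal scale br UNIV Z"
    unfolding lie_ideal_def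
  proof (intro conjI)
    show "module.subspace scale Z"
      unfolding module.subspace_def[OF mod] Z_def
      by (auto simp: br_0l br_addl br_scl module.scale_zero_right[OF mod])
    show "Z \<subseteq> UNIV" by simp
    show "\<forall>x\<in>UNIV. \<forall>y\<in>Z. br x y \<in> Z"
    proof (intro ballI)
      fix x y assume "y \<in> Z"
      then have "br y x = 0" unfolding Z_def by blast
      then have "br x y = 0" using br_anti[of x y] by simp
      then show "br x y \<in> Z" unfolding Z_def by (simp add: br_0l)
    qed
  qed
  have "k \<in> Z" using adk0 unfolding Z_def ad_def by (simp add: fun_eq_iff)
  then have "Z \<noteq> {0}" using k(3) by blast
  then obtain a b where "a \<in> Z" "b \<in> Z" "br a b \<noteq> 0"
    using ms Zid unfolding mult_semiprime_def lie_semiprime_def by blast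
  then show False unfolding Z_def by blast
qed

lemma main_aux:
  assumes sub: "lie_subalgebra scale br L" and dense: "dense_ext scale br L"
    and ms: "mult_semiprime scale br" and qt: "algebra_of_quotients scale br L"
    and ess: "essential_ideal scale br L I"
    and mu: "\<mu> \<in> AQ scale br" and ann: "\<forall>f\<in>tilde scale br L I. \<mu> \<circ> f = (\<lambda>_. 0)"
  shows "\<mu> = (\<lambda>_. 0)"
proof -
  have muM: "\<mu> \<in> MQ scale br" using mu by (rule AQ_MQ)
  have Iid: "lie_ideal scale br L I" using ess unfolding essential_ideal_def by blast
  have IL: "I \<subseteq> L" using Iid unfolding lie_ideal_def by blast
  have Icl: "\<forall>a\<in>I. \<forall>l\<in>L. br a l \<in> I" using ideal_right[OF Iid] by blast
  have adI: "\<forall>a\<in>I. \<mu> \<circ> ad br a = (\<lambda>_. 0)"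
  proof
    fix a assume "a \<in> I"
    then have "ad br a \<in> tilde scale br L I" unfolding tilde_def by (blast intro: ideal_gen.gen)
    then show "\<mu> \<circ> ad br a = (\<lambda>_. 0)" using ann by blast
  qed
  have "br x (\<mu> q) = 0" if x: "x \<in> I" for x q
  proof -
    have gM: "ad br x \<circ> \<mu> \<in> MQ scale br" using muM by (simp add: comp_MQ ad_MQ)
    have "\<forall>\<beta>\<in>MQ scale br. ad br x \<circ> \<mu> \<circ> \<beta> \<circ> (ad br x \<circ> \<mu>) = (\<lambda>_. 0)"
    proof
      fix \<beta> assume b: "\<beta> \<in> MQ scale br"
      have "\<mu> \<circ> \<beta> \<circ> ad br x = (\<lambda>_. 0)"
        using right_stable[OF dense IL Icl b] muM adI x by blast
      then have "\<forall>y. \<mu> (\<beta> (br x y)) = 0" by (simp add: fun_eq_iff ad_def)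
      then show "ad br x \<circ> \<mu> \<circ> \<beta> \<circ> (ad br x \<circ> \<mu>) = (\<lambda>_. 0)"
        by (simp add: fun_eq_iff ad_def br_0r)
    qed
    then have "ad br x \<circ> \<mu> = (\<lambda>_. 0)"
      using semiprime_zero[of "ad br x \<circ> \<mu>"] ms gM unfolding mult_semiprime_def by blast
    then show ?thesis by (simp add: fun_eq_iff ad_def)
  qed
  then have "\<mu> q = 0" for q using ann_zero[OF sub dense ms qt ess] by blast
  then show ?thesis by (simp add: fun_eq_iff)
qed

end

theorem mainTheorem17:
  fixes scale :: "'r::comm_ring_1 \<Rightarrow> 'q::ab_group_add \<Rightarrow> 'q"
    and br :: "'q \<Rightarrow> 'q \<Rightarrow> 'q"
    and L I :: "'q set"
  assumes "lie_algebra scale br"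
    and "lie_subalgebra scale br L"
    and "dense_ext scale br L"
    and "mult_semiprime scale br"
    and "algebra_of_quotients scale br L"
    and "essential_ideal scale br L I"
  shows "l_ann (AQ scale br) (tilde scale br L I) = {\<lambda>_. 0}"
proof -
  have z: "(\<lambda>_. 0) \<in> AQ scale br" unfolding AQ_def by (rule alg_gen.zero)
  show ?thesis
    unfolding l_ann_def
    using main_aux[OF assms] z by (auto simp: comp_def)
qed

end
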